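(* Let $\Lambda$ be a countable index set and let $\{y_\lambda\}_{\lambda\in\Lambda}\subseteq\mathbb R^n$ satisfy: (a) for every compact $K\subseteq\mathbb R^n$ there is $C_K>0$ with $\sup_{x\in\mathbb R^n}|\{\lambda\in\Lambda: x\in y_\lambda+K\}|\le C_K$; (b) there is a bounded open neighbourhood $U$ of the origin with $\mathbb R^n=\bigcup_{\lambda\in\Lambda}(y_\lambda+U)$. Then for every $h>0$ and $\varepsilon>0$ there is $R>0$ such that $$\sup_{\mu\in\Lambda}\sum_{\{\lambda\in\Lambda:\,|y_\lambda-y_\mu|>R\}}e^{-A(h|y_\lambda-y_\mu|)}\le\varepsilon.$$
   Context: $\{A_p\}_{p\in\mathbb N}$ is a sequence of positive numbers with $A_0=A_1=1$ satisfying (M.1) $A_p^2\le A_{p-1}A_{p+1}$ ($p\ge1$), (M.2) $A_{p+q}\le c_0H^{p+q}A_pA_q$ for some $c_0,H\ge1$, (M.6) $p!\le c_0L_0^pA_p$ for some $c_0,L_0\ge1$, and (M.2)$^*$: $2m_p\le m_{pN}$ for $p\ge p_0$, some $p_0,N\in\mathbb Z_+$, where $m_j=A_j/A_{j-1}$. Its associated function is $A(\rho)=\sup_{p\in\mathbb N}\ln(\rho^p/A_p)$, $\rho\ge0$. *)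

theory Defs
  imports "HOL-Analysis.Analysis"
begin

text \<open>Quotient sequence m_j = A_j / A_{j-1} (used for j \<ge> 1).\<close>
definition quot_seq :: "(nat \<Rightarrow> real) \<Rightarrow> nat \<Rightarrow> real" where
  "quot_seq A j = A j / A (j - 1)"

text \<open>Standing assumptions on the weight sequence: positivity, A_0 = A_1 = 1,
 (M.1), (M.2), (M.6) and (M.2)*.\<close>
definition weight_seq :: "(nat \<Rightarrow> real) \<Rightarrow> bool" where
  "weight_seq A \<longleftrightarrow>
     (\<forall>p. A p > 0) \<and> A 0 = 1 \<and> A 1 = 1 \<and>
     (\<forall>p\<ge>1. (A p)\<^sup>2 \<le> A (p - 1) * A (p + 1)) \<and>
     (\<exists>c0 H. c0 \<ge> 1 \<and> H \<ge> 1 \<and> (\<forall>p q. A (p + q) \<le> c0 * H ^ (p + q) * A p * A q)) \<and>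
     (\<exists>c0 L0. c0 \<ge> 1 \<and> L0 \<ge> 1 \<and> (\<forall>p. fact p \<le> c0 * L0 ^ p * A p)) \<and>
     (\<exists>p0 N::nat. p0 \<ge> 1 \<and> N \<ge> 1 \<and>
        (\<forall>p\<ge>p0. 2 * quot_seq A p \<le> quot_seq A (p * N)))"

text \<open>Associated function A(\<rho>) = sup_p ln(\<rho>^p / A_p), \<rho> \<ge> 0.
 The p = 0 term equals ln 1 = 0, so the supremum is \<ge> 0; for \<rho> = 0 it is 0.\<close>
definition assoc_fun :: "(nat \<Rightarrow> real) \<Rightarrow> real \<Rightarrow> real" where
  "assoc_fun A \<rho> = (if \<rho> = 0 then 0 else (SUP p. ln (\<rho> ^ p / A p)))"

end

theory Submission imports Defs begin
lemma pow_fact_le_exp: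
  fixes x :: real assumes "x \<ge> 0" shows "x ^ p / fact p \<le> exp x"
proof -
  have s: "summable (\<lambda>n. x ^ n /\<^sub>R fact n)" by (rule summable_exp_generic)
  have "sum (\<lambda>n. x ^ n /\<^sub>R fact n) {p} \<le> (\<Sum>n. x ^ n /\<^sub>R fact n)"
    by (rule sum_le_suminf[OF s]) (use assms in auto)
  then show ?thesis by (simp add: exp_def divide_inverse mult.commute)
qed

lemma assoc_bound:
  assumes W: "weight_seq A" and r: "\<rho> > 0"
  shows "exp (- assoc_fun A \<rho>) \<le> A p / \<rho> ^ p"
proof -
  have pos: "\<And>q. A q > 0" using W by (auto simp: weight_seq_def)
  obtain c0 L0 where c0: "c0 \<ge> 1" and L0: "L0 \<ge> 1" and M6: "\<And>q. fact q \<le> c0 * L0 ^ q * A q"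
    using W unfolding weight_seq_def by blast
  have bd: "ln (\<rho> ^ q / A q) \<le> ln c0 + L0 * \<rho>" for q
  proof -
    have "\<rho> ^ q / A q \<le> c0 * ((L0 * \<rho>) ^ q / fact q)"
    proof -
      have "\<rho> ^ q * fact q \<le> \<rho> ^ q * (c0 * L0 ^ q * A q)"
        using M6[of q] r by (intro mult_left_mono) auto
      then show ?thesis using pos[of q] r
        by (simp add: field_simps power_mult_distrib)
    qed
    also have "\<dots> \<le> c0 * exp (L0 * \<rho>)"
      using pow_fact_le_exp[of "L0 * \<rho>" q] L0 r c0 by (intro mult_left_mono) auto
    finally have "ln (\<rho> ^ q / A q) \<le> ln (c0 * exp (L0 * \<rho>))"
      using pos[of q] r c0 by (subst ln_le_cancel_iff) auto
    also have "\<dots> = ln c0 + L0 * \<rho>" using c0 by (simp add: ln_mult)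
    finally show ?thesis .
  qed
  have "ln (\<rho> ^ p / A p) \<le> (SUP q. ln (\<rho> ^ q / A q))"
    by (rule cSUP_upper) (use bd in \<open>auto intro!: bdd_aboveI2[where M="ln c0 + L0 * \<rho>"]\<close>)
  hence "ln (\<rho> ^ p / A p) \<le> assoc_fun A \<rho>" using r by (simp add: assoc_fun_def)
  hence "exp (- assoc_fun A \<rho>) \<le> exp (- ln (\<rho> ^ p / A p))" by simp
  also have "\<dots> = A p / \<rho> ^ p" using pos[of p] r by (simp add: exp_minus inverse_divide)
  finally show ?thesis .
qed
definition cubeset :: "'i set \<Rightarrow> ('i \<Rightarrow> real^'n) \<Rightarrow> real^'n \<Rightarrow> real \<Rightarrow> 'i set" where
  "cubeset L y x r = {l\<in>L. \<forall>i. \<bar>y l $ i - x $ i\<bar> \<le> r}"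

lemma cube_double:
  fixes y :: "'i \<Rightarrow> real^'n"
  assumes r: "r \<ge> 0" and H: "\<And>x. finite (cubeset L y x r) \<and> real (card (cubeset L y x r)) \<le> B"
  shows "finite (cubeset L y x (2*r)) \<and> real (card (cubeset L y x (2*r))) \<le> 2 ^ CARD('n) * B"
proof -
  define Sg :: "(real^'n) set" where "Sg = (\<lambda>f. \<chi> i. f i) ` (PiE UNIV (\<lambda>_. {-1,1::real}))"
  have finS: "finite Sg" unfolding Sg_def by (intro finite_imageI finite_PiE) auto
  have cardS: "card Sg \<le> 2 ^ CARD('n)"
  proof -
    have "card Sg \<le> card (PiE (UNIV::'n set) (\<lambda>_. {-1,1::real}))"
      unfolding Sg_def by (rule card_image_le) (intro finite_PiE; auto)
    also have "\<dots> = 2 ^ CARD('n)" by (simp add: card_PiE card_insert_if numeral_2_eq_2)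
    finally show ?thesis .
  qed
  have sub: "cubeset L y x (2*r) \<subseteq> (\<Union>s\<in>Sg. cubeset L y (x + r *\<^sub>R s) r)"
  proof
    fix l assume l: "l \<in> cubeset L y x (2*r)"
    define s :: "real^'n" where "s = (\<chi> i. if y l $ i \<ge> x $ i then 1 else -1)"
    have "s \<in> Sg" unfolding Sg_def s_def
      by (rule image_eqI[where x="\<lambda>i. if y l $ i \<ge> x $ i then 1 else -1"]) (auto split: if_splits)
    moreover have "l \<in> cubeset L y (x + r *\<^sub>R s) r"
      using l r unfolding cubeset_def s_def by (auto simp: abs_le_iff) 
    ultimately show "l \<in> (\<Union>s\<in>Sg. cubeset L y (x + r *\<^sub>R s) r)" by blast
  qed
  have finU: "finite (\<Union>s\<in>Sg. cubeset L y (x + r *\<^sub>R s) r)" using finS H by auto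
  have B0: "B \<ge> 0" using H[of x] by (meson of_nat_0_le_iff order_trans)
  have "real (card (cubeset L y x (2*r))) \<le> real (card (\<Union>s\<in>Sg. cubeset L y (x + r *\<^sub>R s) r))"
    using card_mono[OF finU sub] by simp
  also have "\<dots> \<le> real (\<Sum>s\<in>Sg. card (cubeset L y (x + r *\<^sub>R s) r))"
    using card_UN_le[OF finS] by (simp only: of_nat_le_iff)
  also have "\<dots> = (\<Sum>s\<in>Sg. real (card (cubeset L y (x + r *\<^sub>R s) r)))" by simp
  also have "\<dots> \<le> (\<Sum>s\<in>Sg. B)" by (rule sum_mono) (use H in auto)
  also have "\<dots> = real (card Sg) * B" by simp
  also have "\<dots> \<le> 2 ^ CARD('n) * B" using cardS B0
    by (intro mult_right_mono) (simp_all add: of_nat_le_iff[symmetric])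
  finally show ?thesis using finite_subset[OF sub finU] by simp
qed
lemma shell_exists:
  fixes t :: real
  assumes "t > 2 ^ a" "t \<le> 2 ^ (a + j)"
  shows "\<exists>k\<in>{a..<a+j}. 2 ^ k < t \<and> t \<le> 2 ^ (k + 1)"
  using assms
proof (induction j arbitrary: a)
  case 0 then show ?case by simp
next
  case (Suc j)
  show ?case
  proof (cases "t \<le> 2 ^ (a + 1)")
    case True then show ?thesis using Suc.prems by force
  next
    case False
    then have "t > 2 ^ (a + 1)" by simp
    moreover have "t \<le> 2 ^ (a + 1 + j)" using Suc.prems by simp
    ultimately obtain k where "k \<in> {a+1..<a+1+j}" "2 ^ k < t \<and> t \<le> 2 ^ (k + 1)"
      using Suc.IH by blast
    then show ?thesis by (intro bexI[of _ k]) auto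
  qed
qed

lemma geom_half:
  "(\<Sum>k\<in>{a..<a+j}. (1/2::real) ^ k) = 2 * (1/2) ^ a - 2 * (1/2) ^ (a + j)"
proof (induction j)
  case 0 then show ?case by simp
next
  case (Suc j)
  have "(\<Sum>k\<in>{a..<a+Suc j}. (1/2::real) ^ k) = (\<Sum>k\<in>{a..<a+j}. (1/2::real) ^ k) + (1/2) ^ (a + j)"
    by (simp add: sum.atLeastLessThan_Suc)
  also have "\<dots> = 2 * (1/2) ^ a - 2 * (1/2) ^ (a + j) + (1/2) ^ (a + j)" using Suc.IH by simp
  also have "\<dots> = 2 * (1/2) ^ a - 2 * (1/2) ^ (a + Suc j)" by simp
  finally show ?case .
qed

lemma card_bound_alg:
  fixes C Ap h :: real and n k :: nat
  assumes "h > 0"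
  shows "C * (2 ^ n) ^ (k + 1) * (Ap / (h * 2 ^ k) ^ (n + 1))
       = C * 2 ^ n * Ap / h ^ (n + 1) * (1/2) ^ k"
proof -
  have e1: "((2::real) ^ n) ^ (k + 1) = 2 ^ n * 2 ^ (k * n)"
    by (simp add: power_mult[symmetric] power_add algebra_simps)
  have e2: "(h * 2 ^ k) ^ (n + 1) = h ^ (n + 1) * (2 ^ k * 2 ^ (k * n))"
    by (simp add: power_mult_distrib power_mult[symmetric] power_add algebra_simps)
  show ?thesis unfolding e1 e2 using assms by (simp add: field_simps power_one_over)
qed
theorem lemma3p16:
  fixes A :: "nat \<Rightarrow> real"
    and \<Lambda> :: "'i set"
    and y :: "'i \<Rightarrow> real ^ 'n"
  assumes "weight_seq A"
    and "countable \<Lambda>"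
    and "\<forall>K. compact K \<longrightarrow> (\<exists>C::real. C > 0 \<and>
            (\<forall>x. finite {l\<in>\<Lambda>. x \<in> (\<lambda>k. y l + k) ` K} \<and>
                 real (card {l\<in>\<Lambda>. x \<in> (\<lambda>k. y l + k) ` K}) \<le> C))"
    and "\<exists>U. open U \<and> bounded U \<and> 0 \<in> U \<and> UNIV = (\<Union>l\<in>\<Lambda>. (\<lambda>u. y l + u) ` U)"
    and "h > 0" and "\<epsilon> > 0"
  shows "\<exists>R>0. \<forall>m\<in>\<Lambda>.
           (\<lambda>l. exp (- assoc_fun A (h * norm (y l - y m))))
              summable_on {l\<in>\<Lambda>. norm (y l - y m) > R} \<and>
           (\<Sum>\<^sub>\<infinity>l\<in>{l\<in>\<Lambda>. norm (y l - y m) > R}. exp (- assoc_fun A (h * norm (y l - y m)))) \<le> \<epsilon>"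
proof -
  define n where "n = CARD('n)"
  define p where "p = n + 1"
  define K :: "(real^'n) set" where "K = cbox (\<chi> i. -1) (\<chi> i. 1)"
  have "compact K" unfolding K_def by (rule compact_cbox)
  then obtain C :: real where C: "C > 0" and HC: "\<And>x. finite {l\<in>\<Lambda>. x \<in> (\<lambda>k. y l + k) ` K} \<and>
                 real (card {l\<in>\<Lambda>. x \<in> (\<lambda>k. y l + k) ` K}) \<le> C"
    using assms(3) by blast
  have eqK: "{l\<in>\<Lambda>. x \<in> (\<lambda>k. y l + k) ` K} = cubeset \<Lambda> y x 1" for x
  proof -
    have "x \<in> (\<lambda>k. y l + k) ` K \<longleftrightarrow> x - y l \<in> K" for l
    proof
      assume "x \<in> (\<lambda>k. y l + k) ` K" then obtain k where "k \<in> K" "x = y l + k" by blast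
      then show "x - y l \<in> K" by simp
    next
      assume "x - y l \<in> K" then show "x \<in> (\<lambda>k. y l + k) ` K"
        by (intro image_eqI[where x="x - y l"]) auto
    qed
    then show ?thesis unfolding cubeset_def K_def
      by (auto simp: mem_box_cart abs_le_iff; smt (verit, best))
  qed
  have cnt: "finite (cubeset \<Lambda> y x (2 ^ k)) \<and> real (card (cubeset \<Lambda> y x (2 ^ k))) \<le> C * (2 ^ n) ^ k"
    for k x
  proof (induction k arbitrary: x)
    case 0 then show ?case using HC eqK by simp
  next
    case (Suc k)
    have "finite (cubeset \<Lambda> y x (2 * 2 ^ k)) \<and> real (card (cubeset \<Lambda> y x (2 * 2 ^ k))) \<le> 2 ^ CARD('n) * (C * (2 ^ n) ^ k)"
      by (rule cube_double) (use Suc.IH in auto)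
    then show ?case by (simp add: n_def algebra_simps)
  qed
  have pos: "\<And>q. A q > 0" using assms(1) by (auto simp: weight_seq_def)
  define Mc where "Mc = C * 2 ^ n * A p / h ^ p"
  have Mc: "Mc > 0" unfolding Mc_def using C pos assms(5) by simp
  obtain k0 where k0: "(1/2::real) ^ k0 < \<epsilon> / (2 * Mc)"
    using real_arch_pow_inv[of "\<epsilon> / (2 * Mc)" "1/2"] Mc assms(6) by auto
  define R :: real where "R = 2 ^ k0"
  have "R > 0" unfolding R_def by simp
  moreover have "\<forall>m\<in>\<Lambda>.
           (\<lambda>l. exp (- assoc_fun A (h * norm (y l - y m))))
              summable_on {l\<in>\<Lambda>. norm (y l - y m) > R} \<and>
           (\<Sum>\<^sub>\<infinity>l\<in>{l\<in>\<Lambda>. norm (y l - y m) > R}. exp (- assoc_fun A (h * norm (y l - y m)))) \<le> \<epsilon>"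
  proof
    fix m assume m: "m \<in> \<Lambda>"
    define T where "T = {l\<in>\<Lambda>. norm (y l - y m) > R}"
    define g where "g = (\<lambda>l. exp (- assoc_fun A (h * norm (y l - y m))))"
    define d where "d = (\<lambda>l. norm (y l - y m))"
    have key: "sum g F \<le> \<epsilon>" if F: "finite F" "F \<subseteq> T" for F
    proof -
      obtain J where J: "sum d F < 2 ^ J" using real_arch_pow[of 2 "sum d F"] by auto
      define shell where "shell = (\<lambda>k l. 2 ^ k < d l \<and> d l \<le> (2::real) ^ (k + 1))"
      have ex: "\<exists>k\<in>{k0..<k0+J}. shell k l" if l: "l \<in> F" for l
      proof -
        have "d l \<le> sum d F" using F l by (intro member_le_sum) (auto simp: d_def)
        also have "\<dots> < 2 ^ J" by (rule J)
        also have "\<dots> \<le> 2 ^ (k0 + J)" by (intro power_increasing) auto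
        finally have "d l \<le> 2 ^ (k0 + J)" by simp
        moreover have "d l > 2 ^ k0" using F l unfolding T_def d_def R_def by auto
        ultimately show ?thesis unfolding shell_def by (intro shell_exists) auto
      qed
      have gpos: "g l \<ge> 0" for l unfolding g_def by simp
      have "sum g F \<le> (\<Sum>l\<in>F. \<Sum>k\<in>{k0..<k0+J}. if shell k l then g l else 0)"
      proof (rule sum_mono)
        fix l assume "l \<in> F"
        then obtain k where k: "k \<in> {k0..<k0+J}" "shell k l" using ex by blast
        have "g l = (if shell k l then g l else 0)" using k by simp
        also have "\<dots> \<le> (\<Sum>k\<in>{k0..<k0+J}. if shell k l then g l else 0)"
          by (rule member_le_sum[OF k(1)]) (auto simp: gpos)
        finally show "g l \<le> (\<Sum>k\<in>{k0..<k0+J}. if shell k l then g l else 0)" .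
      qed
      also have "\<dots> = (\<Sum>k\<in>{k0..<k0+J}. \<Sum>l\<in>F. if shell k l then g l else 0)"
        by (rule sum.swap)
      also have "\<dots> = (\<Sum>k\<in>{k0..<k0+J}. sum g {l\<in>F. shell k l})"
        using F(1) by (simp add: sum.inter_filter)
      also have "\<dots> \<le> (\<Sum>k\<in>{k0..<k0+J}. Mc * (1/2) ^ k)"
      proof (rule sum_mono)
        fix k
        have "sum g {l\<in>F. shell k l} \<le> (\<Sum>l\<in>{l\<in>F. shell k l}. A p / (h * 2 ^ k) ^ p)"
        proof (rule sum_mono)
          fix l assume l: "l \<in> {l\<in>F. shell k l}"
          have dpos: "h * d l > 0" using l assms(5) unfolding shell_def
            by (auto intro!: mult_pos_pos less_trans[of 0 "2^k"])
          have "g l \<le> A p / (h * d l) ^ p" unfolding g_def d_def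
            using assoc_bound[OF assms(1) dpos[unfolded d_def]] by simp
          also have "\<dots> \<le> A p / (h * 2 ^ k) ^ p"
            using l assms(5) pos[of p] unfolding shell_def
            by (intro divide_left_mono power_mono mult_left_mono mult_pos_pos zero_less_power) auto
          finally show "g l \<le> A p / (h * 2 ^ k) ^ p" .
        qed
        also have "\<dots> = real (card {l\<in>F. shell k l}) * (A p / (h * 2 ^ k) ^ p)" by simp
        also have "\<dots> \<le> C * (2 ^ n) ^ (k + 1) * (A p / (h * 2 ^ k) ^ p)"
        proof (rule mult_right_mono)
          have sub: "{l\<in>F. shell k l} \<subseteq> cubeset \<Lambda> y (y m) (2 ^ (k + 1))"
          proof
            fix l assume l: "l \<in> {l\<in>F. shell k l}"
            have "\<bar>y l $ i - y m $ i\<bar> \<le> 2 ^ (k + 1)" for i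
            proof -
              have "\<bar>y l $ i - y m $ i\<bar> = \<bar>(y l - y m) $ i\<bar>" by simp
              also have "\<dots> \<le> norm (y l - y m)" by (rule component_le_norm_cart)
              also have "\<dots> \<le> 2 ^ (k + 1)" using l unfolding shell_def d_def by simp
              finally show ?thesis .
            qed
            then show "l \<in> cubeset \<Lambda> y (y m) (2 ^ (k + 1))"
              using l F(2) unfolding cubeset_def T_def by auto
          qed
          have "real (card {l\<in>F. shell k l}) \<le> real (card (cubeset \<Lambda> y (y m) (2 ^ (k + 1))))"
            using card_mono[OF _ sub] cnt[of "y m" "k + 1"] by (simp del: power_Suc)
          also have "\<dots> \<le> C * (2 ^ n) ^ (k + 1)" using cnt[of "y m" "k + 1"] by blast
          finally show "real (card {l\<in>F. shell k l}) \<le> C * (2 ^ n) ^ (k + 1)" .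
          show "0 \<le> A p / (h * 2 ^ k) ^ p" using pos[of p] assms(5) by simp
        qed
        also have "\<dots> = Mc * (1/2) ^ k"
          unfolding Mc_def p_def by (rule card_bound_alg[OF assms(5)])
        finally show "sum g {l\<in>F. shell k l} \<le> Mc * (1/2) ^ k" .
      qed
      also have "\<dots> = Mc * (2 * (1/2) ^ k0 - 2 * (1/2) ^ (k0 + J))"
        by (simp add: sum_distrib_left[symmetric] geom_half)
      also have "\<dots> \<le> Mc * (2 * (1/2) ^ k0)" using Mc by (intro mult_left_mono) auto
      also have "\<dots> \<le> \<epsilon>" using k0 Mc by (simp add: field_simps)
      finally show ?thesis .
    qed
    have nn: "\<And>l. l \<in> T \<Longrightarrow> 0 \<le> g l" unfolding g_def by simp
    have sm: "g summable_on T"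
      by (rule nonneg_bdd_above_summable_on[OF nn]) (use key in \<open>auto intro!: bdd_aboveI[where M=\<epsilon>]\<close>)
    moreover have "infsum g T \<le> \<epsilon>" by (rule infsum_le_finite_sums[OF sm key])
    ultimately show "g summable_on T \<and> infsum g T \<le> \<epsilon>" by simp
  qed
  ultimately show ?thesis by blast
qed

end
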